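(* Let $\mathsf{CS}$ be a constant specification for $\mathsf{LPC}^{int}$. For every set of formulas $T$ and formula $\phi$: if $T\models_{\mathsf{LPC}^{int}_{\mathsf{CS}}}\phi$, then $T\vdash_{\mathsf{LPC}^{int}_{\mathsf{CS}}}\phi$.
   Context: Language of $\mathsf{LPC}^{int}$: countable sets $\mathsf{Const}$, $\mathsf{Var}$, $\mathsf{Prop}$; terms and formulas defined by mutual recursion: $t ::= c \mid x \mid t\cdot t \mid t+t \mid\ !t \mid \langle t,\phi\rangle$ and $\phi ::= p \mid \neg\phi \mid \phi\wedge\phi \mid \phi\supset\phi \mid \phi>\phi \mid t{:}\phi$; $\mathsf{Tm},\mathsf{Fm}$ the sets of terms and formulas. Axiom schemes: (A1) all instances of classical tautologies; (A2) $(\phi>(\psi\supset\chi))\supset((\phi>\psi)\supset(\phi>\chi))$; (A3) $\phi>\phi$; (A4) $(\phi>\psi)\supset(\phi\supset\psi)$; (A5) $(s{:}(\phi>\psi)\wedge t{:}\phi) > (s\cdot t){:}\psi$; (A6) $s{:}\phi > (s+t){:}\phi$; (A7) $t{:}\phi>(s+t){:}\phi$; (A8) $t{:}\phi>\phi$; (A9) $t{:}\phi > (!t){:}t{:}\phi$; (A10) $t{:}\psi\supset\langle t,\phi\rangle{:}(\phi>\psi)$. A constant specification $\mathsf{CS}$ is a set of $c{:}\phi$ with $c\in\mathsf{Const}$, $\phi$ an instance of (A1)–(A10). $\mathsf{LPC}^{int}_{\mathsf{CS}}$: axioms (A1)–(A10) and $\mathsf{CS}$; rules (MP) from $\phi,\phi\supset\psi$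 infer $\psi$, and (RCN) from $\psi$ infer $\phi>\psi$. $T\vdash\phi$ iff $\vdash(\psi_1\wedge\cdots\wedge\psi_n)\supset\phi$ for some $\psi_1,\dots,\psi_n\in T$, $n\ge0$. Relational models $\mathcal M=(W,W_N,R_{Fm},R_{Tm},V)$: $W$ nonempty, $W_N\subseteq W$ nonempty (normal states); $R_\phi\subseteq W_N\times W_N$ for each formula; $R_t\subseteq W\times W$ for each term; $V(w)\subseteq\mathsf{Prop}$ for $w\in W_N$, $V(w)\subseteq\mathsf{Fm}$ for $w\in W\setminus W_N$. Truth: at non-normal $w$, $w\models\phi$ iff $\phi\in V(w)$; at normal $w$: $p$ iff $p\in V(w)$, $\neg,\wedge,\supset$ classical, $\phi>\psi$ iff $R_\phi(w)\subseteq[\psi]$, $t{:}\phi$ iff $R_t(w)\subseteq[\phi]$, with $[\phi]=\{w\in W:w\models\phi\}$. An $\mathsf{LPC}^{int}_{\mathsf{CS}}$-model is a relational model such that for all $w\in W_N$: (1) $R_\phi(w)\subseteq[\phi]$; (2) if $w\in[\phi]$ then $w\in R_\phi(w)$; (3) $R_c(w)\subseteq[\phi]$ for each $c{:}\phi\in\mathsf{CS}$; (4) $R_{s+t}(w)\subseteq R_s(w)\cap R_t(w)$; (5) for all $v\in R_{s\cdot t}(w)$, all $\phi,\psi$: if $w\in[s{:}(\phi>\psi)\wedge t{:}\phi]$ then $v\in[\psi]$; (6) $wR_tw$; (7) for $v,u\in W$, if $wR_{!t}v$ and $vR_tu$ then $wR_tu$; (8) for all $v\in W$, $\phi,\psi$,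 $t$: if $w\in[t{:}\psi]$ and $wR_{\langle t,\phi\rangle}v$ then $v\in[\phi>\psi]$. $T\models_{\mathsf{LPC}^{int}_{\mathsf{CS}}}\phi$ iff for every such model and every $w\in W_N$ at which all members of $T$ are true, $\phi$ is true at $w$. *)

theory Defs
  imports Main "HOL-Library.Countable"
begin

datatype ('c, 'v, 'p) tm =
    Const 'c
  | TVar 'v
  | App "('c, 'v, 'p) tm" "('c, 'v, 'p) tm"
  | Plus "('c, 'v, 'p) tm" "('c, 'v, 'p) tm"
  | Bang "('c, 'v, 'p) tm"
  | TPair "('c, 'v, 'p) tm" "('c, 'v, 'p) fm"
and ('c, 'v, 'p) fm =
    Atom 'p
  | Neg "('c, 'v, 'p) fm"
  | And "('c, 'v, 'p) fm" "('c, 'v, 'p) fm"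
  | Imp "('c, 'v, 'p) fm" "('c, 'v, 'p) fm"
  | Cond "('c, 'v, 'p) fm" "('c, 'v, 'p) fm"     (* phi > psi *)
  | Just "('c, 'v, 'p) tm" "('c, 'v, 'p) fm"

text \<open>Classical truth-functional evaluation, treating every formula whose main
connective is not a Boolean connective (atoms, conditionals, justification
formulas) as a propositional atom.  An instance of a classical tautology is a
formula true under every such valuation.\<close>

fun tval :: "(('c, 'v, 'p) fm \<Rightarrow> bool) \<Rightarrow> ('c, 'v, 'p) fm \<Rightarrow> bool" where
  "tval v (Atom p) = v (Atom p)"
| "tval v (Neg a) = (\<not> tval v a)"
| "tval v (And a b) = (tval v a \<and> tval v b)"
| "tval v (Imp a b) = (tval v a \<longrightarrow> tval v b)"
| "tval v (Cond a b) = v (Cond a b)"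
| "tval v (Just t a) = v (Just t a)"

definition taut_inst :: "('c, 'v, 'p) fm \<Rightarrow> bool" where
  "taut_inst \<phi> \<longleftrightarrow> (\<forall>v. tval v \<phi>)"

inductive is_axiom :: "('c, 'v, 'p) fm \<Rightarrow> bool" where
  A1: "taut_inst \<phi> \<Longrightarrow> is_axiom \<phi>"
| A2: "is_axiom (Imp (Cond \<phi> (Imp \<psi> \<chi>)) (Imp (Cond \<phi> \<psi>) (Cond \<phi> \<chi>)))"
| A3: "is_axiom (Cond \<phi> \<phi>)"
| A4: "is_axiom (Imp (Cond \<phi> \<psi>) (Imp \<phi> \<psi>))"
| A5: "is_axiom (Cond (And (Just s (Cond \<phi> \<psi>)) (Just t \<phi>)) (Just (App s t) \<psi>))"
| A6: "is_axiom (Cond (Just s \<phi>) (Just (Plus s t) \<phi>))"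
| A7: "is_axiom (Cond (Just t \<phi>) (Just (Plus s t) \<phi>))"
| A8: "is_axiom (Cond (Just t \<phi>) \<phi>)"
| A9: "is_axiom (Cond (Just t \<phi>) (Just (Bang t) (Just t \<phi>)))"
| A10: "is_axiom (Imp (Just t \<psi>) (Just (TPair t \<phi>) (Cond \<phi> \<psi>)))"

definition const_spec :: "('c, 'v, 'p) fm set \<Rightarrow> bool" where
  "const_spec CS \<longleftrightarrow> (\<forall>x\<in>CS. \<exists>c \<phi>. x = Just (Const c) \<phi> \<and> is_axiom \<phi>)"

inductive derivable :: "('c, 'v, 'p) fm set \<Rightarrow> ('c, 'v, 'p) fm \<Rightarrow> bool" for CS where
  Ax: "is_axiom \<phi> \<Longrightarrow> derivable CS \<phi>"
| CSax: "\<phi> \<in> CS \<Longrightarrow> derivable CS \<phi>"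
| MP: "derivable CS \<phi> \<Longrightarrow> derivable CS (Imp \<phi> \<psi>) \<Longrightarrow> derivable CS \<psi>"
| RCN: "derivable CS \<psi> \<Longrightarrow> derivable CS (Cond \<phi> \<psi>)"

fun conjs :: "('c, 'v, 'p) fm list \<Rightarrow> ('c, 'v, 'p) fm" where
  "conjs [] = Neg (Imp (Atom undefined) (Atom undefined))"
| "conjs [\<psi>] = \<psi>"
| "conjs (\<psi> # \<psi>s) = And \<psi> (conjs \<psi>s)"

definition derives :: "('c, 'v, 'p) fm set \<Rightarrow> ('c, 'v, 'p) fm set \<Rightarrow> ('c, 'v, 'p) fm \<Rightarrow> bool" where
  "derives CS T \<phi> \<longleftrightarrow>
     derivable CS \<phi> \<or> (\<exists>\<psi>s. \<psi>s \<noteq> [] \<and> set \<psi>s \<subseteq> T \<and> derivable CS (Imp (conjs \<psi>s) \<phi>))"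

text \<open>The valuation V is split into VN (used at normal states, V(w) a set of
propositional letters) and VX (used at non-normal states, V(w) a set of formulas).\<close>
record ('w, 'c, 'v, 'p) rmodel =
  W  :: "'w set"
  WN :: "'w set"
  RF :: "('c, 'v, 'p) fm \<Rightarrow> ('w \<times> 'w) set"
  RT :: "('c, 'v, 'p) tm \<Rightarrow> ('w \<times> 'w) set"
  VN :: "'w \<Rightarrow> 'p set"
  VX :: "'w \<Rightarrow> ('c, 'v, 'p) fm set"

definition rel_model :: "('w, 'c, 'v, 'p) rmodel \<Rightarrow> bool" where
  "rel_model M \<longleftrightarrow> W M \<noteq> {} \<and> WN M \<subseteq> W M \<and> WN M \<noteq> {}
     \<and> (\<forall>\<phi>. RF M \<phi> \<subseteq> WN M \<times> WN M) \<and> (\<forall>t. RT M t \<subseteq> W M \<times> W M)"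

fun sat :: "('w, 'c, 'v, 'p) rmodel \<Rightarrow> 'w \<Rightarrow> ('c, 'v, 'p) fm \<Rightarrow> bool" where
  "sat M w (Atom p) = (if w \<in> WN M then p \<in> VN M w else Atom p \<in> VX M w)"
| "sat M w (Neg a) = (if w \<in> WN M then \<not> sat M w a else Neg a \<in> VX M w)"
| "sat M w (And a b) = (if w \<in> WN M then sat M w a \<and> sat M w b else And a b \<in> VX M w)"
| "sat M w (Imp a b) = (if w \<in> WN M then (sat M w a \<longrightarrow> sat M w b) else Imp a b \<in> VX M w)"
| "sat M w (Cond a b) = (if w \<in> WN M then (\<forall>v. (w, v) \<in> RF M a \<longrightarrow> v \<in> W M \<and> sat M v b)
                          else Cond a b \<in> VX M w)"
| "sat M w (Just t a) = (if w \<in> WN M then (\<forall>v. (w, v) \<in> RT M t \<longrightarrow> v \<in> W M \<and> sat M v a)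
                          else Just t a \<in> VX M w)"

definition ext :: "('w, 'c, 'v, 'p) rmodel \<Rightarrow> ('c, 'v, 'p) fm \<Rightarrow> 'w set" where
  "ext M \<phi> = {w \<in> W M. sat M w \<phi>}"

definition succs :: "('w \<times> 'w) set \<Rightarrow> 'w \<Rightarrow> 'w set" where
  "succs R w = {v. (w, v) \<in> R}"

definition lpc_model :: "('c, 'v, 'p) fm set \<Rightarrow> ('w, 'c, 'v, 'p) rmodel \<Rightarrow> bool" where
  "lpc_model CS M \<longleftrightarrow> rel_model M \<and> (\<forall>w \<in> WN M.
      (\<forall>\<phi>. succs (RF M \<phi>) w \<subseteq> ext M \<phi>)
    \<and> (\<forall>\<phi>. w \<in> ext M \<phi> \<longrightarrow> w \<in> succs (RF M \<phi>) w)
    \<and> (\<forall>c \<phi>. Just (Const c) \<phi> \<in> CS \<longrightarrow> succs (RT M (Const c)) w \<subseteq> ext M \<phi>)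
    \<and> (\<forall>s t. succs (RT M (Plus s t)) w \<subseteq> succs (RT M s) w \<inter> succs (RT M t) w)
    \<and> (\<forall>s t. \<forall>v \<in> succs (RT M (App s t)) w. \<forall>\<phi> \<psi>.
          w \<in> ext M (And (Just s (Cond \<phi> \<psi>)) (Just t \<phi>)) \<longrightarrow> v \<in> ext M \<psi>)
    \<and> (\<forall>t. (w, w) \<in> RT M t)
    \<and> (\<forall>t. \<forall>v \<in> W M. \<forall>u \<in> W M. (w, v) \<in> RT M (Bang t) \<and> (v, u) \<in> RT M t \<longrightarrow> (w, u) \<in> RT M t)
    \<and> (\<forall>v \<in> W M. \<forall>\<phi> \<psi> t. w \<in> ext M (Just t \<psi>) \<and> (w, v) \<in> RT M (TPair t \<phi>)
          \<longrightarrow> v \<in> ext M (Cond \<phi> \<psi>)))"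

definition entails :: "('c, 'v, 'p) fm set \<Rightarrow> ('c, 'v, 'p) fm set \<Rightarrow> ('c, 'v, 'p) fm \<Rightarrow> bool" where
  "entails CS T \<phi> \<longleftrightarrow>
     (\<forall>M :: (('c, 'v, 'p) fm set set, 'c, 'v, 'p) rmodel. lpc_model CS M \<longrightarrow>
        (\<forall>w \<in> WN M. (\<forall>\<psi> \<in> T. sat M w \<psi>) \<longrightarrow> sat M w \<phi>))"

end

theory Submission
  imports Defs
begin

definition fbot :: "('c, 'v, 'p) fm" where
  "fbot = Neg (Imp (Atom undefined) (Atom undefined))"

fun imps :: "('c, 'v, 'p) fm list \<Rightarrow> ('c, 'v, 'p) fm \<Rightarrow> ('c, 'v, 'p) fm" where
  "imps [] b = b"
| "imps (x # xs) b = Imp x (imps xs b)"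

lemma tval_imps[simp]: "tval v (imps L b) = ((\<forall>x\<in>set L. tval v x) \<longrightarrow> tval v b)"
  by (induct L) auto

lemma tval_fbot[simp]: "\<not> tval v fbot"
  by (simp add: fbot_def)

lemma tval_conjs: "L \<noteq> [] \<Longrightarrow> tval v (conjs L) = (\<forall>x\<in>set L. tval v x)"
  by (induct L rule: conjs.induct) auto

lemma taut_der: "taut_inst a \<Longrightarrow> derivable CS a"
  by (simp add: derivable.Ax is_axiom.A1)

lemma taut_mp: "derivable CS a \<Longrightarrow> (\<And>v. tval v a \<Longrightarrow> tval v b) \<Longrightarrow> derivable CS b"
  by (metis derivable.MP taut_der taut_inst_def tval.simps(4))

lemma taut_mp2: "derivable CS a \<Longrightarrow> derivable CS b \<Longrightarrow> (\<And>v. tval v a \<Longrightarrow> tval v b \<Longrightarrow> tval v c)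
   \<Longrightarrow> derivable CS c"
proof -
  assume h: "\<And>v. tval v a \<Longrightarrow> tval v b \<Longrightarrow> tval v c" and a: "derivable CS a" and b: "derivable CS b"
  have "derivable CS (Imp b c)" using a by (rule taut_mp) (simp add: h)
  then show ?thesis using b by (metis derivable.MP)
qed

definition cons :: "('c, 'v, 'p) fm set \<Rightarrow> ('c, 'v, 'p) fm set \<Rightarrow> bool" where
  "cons CS S \<longleftrightarrow> (\<forall>L. set L \<subseteq> S \<longrightarrow> \<not> derivable CS (imps L fbot))"

definition mcs :: "('c, 'v, 'p) fm set \<Rightarrow> ('c, 'v, 'p) fm set \<Rightarrow> bool" where
  "mcs CS G \<longleftrightarrow> cons CS G \<and> (\<forall>\<psi>. \<psi> \<in> G \<or> Neg \<psi> \<in> G)"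

lemma mcs_nder: "mcs CS G \<Longrightarrow> set L \<subseteq> G \<Longrightarrow> derivable CS (imps L fbot) \<Longrightarrow> False"
  unfolding mcs_def cons_def by blast

lemma mcs_closed:
  assumes m: "mcs CS G" and L: "set L \<subseteq> G" and d: "derivable CS (imps L a)"
  shows "a \<in> G"
proof (rule ccontr)
  assume "a \<notin> G"
  then have "Neg a \<in> G" using m by (auto simp: mcs_def)
  then have s: "set (Neg a # L) \<subseteq> G" using L by auto
  have "derivable CS (imps (Neg a # L) fbot)" using d by (rule taut_mp) auto
  then show False using m s by (rule mcs_nder[rotated -1])
qed

lemma mcs_taut: "mcs CS G \<Longrightarrow> set L \<subseteq> G \<Longrightarrow> (\<And>v. tval v (imps L a)) \<Longrightarrow> a \<in> G"
  by (rule mcs_closed) (auto intro: taut_der simp: taut_inst_def)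

lemma mcs_der: "mcs CS G \<Longrightarrow> derivable CS a \<Longrightarrow> a \<in> G"
  using mcs_closed[of CS G "[]" a] by simp

lemma mcs_mp: "mcs CS G \<Longrightarrow> a \<in> G \<Longrightarrow> Imp a b \<in> G \<Longrightarrow> b \<in> G"
  by (rule mcs_closed[of CS G "[a, Imp a b]"]) (auto intro: taut_der simp: taut_inst_def)

lemma mcs_neg: "mcs CS G \<Longrightarrow> (Neg a \<in> G) = (a \<notin> G)"
proof -
  assume m: "mcs CS G"
  have "\<not> (a \<in> G \<and> Neg a \<in> G)"
  proof
    assume "a \<in> G \<and> Neg a \<in> G"
    then have "set [a, Neg a] \<subseteq> G" by auto
    moreover have "derivable CS (imps [a, Neg a] fbot)" by (rule taut_der) (simp add: taut_inst_def)
    ultimately show False using m by (metis mcs_nder)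
  qed
  then show ?thesis using m by (auto simp: mcs_def)
qed

lemma mcs_and: "mcs CS G \<Longrightarrow> (And a b \<in> G) = (a \<in> G \<and> b \<in> G)"
proof -
  assume m: "mcs CS G"
  show ?thesis
  proof
    assume "And a b \<in> G"
    then show "a \<in> G \<and> b \<in> G"
      using mcs_taut[OF m, of "[And a b]" a] mcs_taut[OF m, of "[And a b]" b]
      by auto
  next
    assume "a \<in> G \<and> b \<in> G"
    then show "And a b \<in> G"
      using mcs_taut[OF m, of "[a, b]" "And a b"]
      by auto
  qed
qed

lemma mcs_imp: "mcs CS G \<Longrightarrow> (Imp a b \<in> G) = (a \<in> G \<longrightarrow> b \<in> G)"
proof -
  assume m: "mcs CS G"
  show ?thesis
  proof
    assume "Imp a b \<in> G"
    then show "a \<in> G \<longrightarrow> b \<in> G" using mcs_mp[OF m] by blast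
  next
    assume h: "a \<in> G \<longrightarrow> b \<in> G"
    show "Imp a b \<in> G"
    proof (cases "a \<in> G")
      case True
      then have "b \<in> G" using h by auto
      then show ?thesis using mcs_taut[OF m, of "[b]" "Imp a b"]
        by auto
    next
      case False
      then have "Neg a \<in> G" using mcs_neg[OF m] by auto
      then show ?thesis using mcs_taut[OF m, of "[Neg a]" "Imp a b"]
        by auto
    qed
  qed
qed

lemma mcs_ax: "mcs CS G \<Longrightarrow> is_axiom a \<Longrightarrow> a \<in> G"
  by (simp add: derivable.Ax mcs_der)

lemma mcs_cond_mp: "mcs CS G \<Longrightarrow> Cond a b \<in> G \<Longrightarrow> a \<in> G \<Longrightarrow> b \<in> G"
  by (meson is_axiom.A4 mcs_ax mcs_mp)

lemma mcs_fact: "mcs CS G \<Longrightarrow> Just t a \<in> G \<Longrightarrow> a \<in> G"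
  by (meson is_axiom.A8 mcs_ax mcs_cond_mp)

lemma chain_fin:
  assumes "C \<in> chains A" "C \<noteq> {}" "set L \<subseteq> \<Union>C"
  shows "\<exists>X\<in>C. set L \<subseteq> X"
  using assms(3)
proof (induct L)
  case Nil
  then show ?case using assms(2) by auto
next
  case (Cons x L)
  then obtain X where X: "X \<in> C" "set L \<subseteq> X" by auto
  obtain Y where Y: "Y \<in> C" "x \<in> Y" using Cons.prems by auto
  have "X \<subseteq> Y \<or> Y \<subseteq> X" using assms(1) X(1) Y(1) by (auto simp: chains_def chain_subset_def)
  then show ?case using X Y by auto
qed

lemma lindenbaum:
  assumes c: "cons CS S"
  shows "\<exists>G. S \<subseteq> G \<and> mcs CS G"
proof -
  let ?A = "{X. S \<subseteq> X \<and> cons CS X}"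
  have "\<forall>C\<in>chains ?A. \<exists>U\<in>?A. \<forall>X\<in>C. X \<subseteq> U"
  proof
    fix C assume C: "C \<in> chains ?A"
    show "\<exists>U\<in>?A. \<forall>X\<in>C. X \<subseteq> U"
    proof (cases "C = {}")
      case True
      then show ?thesis using c by auto
    next
      case False
      have "cons CS (\<Union>C)"
        unfolding cons_def
      proof (intro allI impI)
        fix L assume "set L \<subseteq> \<Union>C"
        then obtain X where "X \<in> C" "set L \<subseteq> X" using chain_fin[OF C False] by blast
        moreover have "cons CS X" using C \<open>X \<in> C\<close> by (auto simp: chains_def)
        ultimately show "\<not> derivable CS (imps L fbot)" by (auto simp: cons_def)
      qed
      moreover have "S \<subseteq> \<Union>C" using False C by (auto simp: chains_def)
      ultimately show ?thesis by blast
    qed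
  qed
  from Zorn_Lemma2[OF this] obtain M where M: "M \<in> ?A" and mx: "\<forall>X\<in>?A. M \<subseteq> X \<longrightarrow> X = M"
    by blast
  have "\<forall>\<psi>. \<psi> \<in> M \<or> Neg \<psi> \<in> M"
  proof (rule ccontr)
    assume "\<not> (\<forall>\<psi>. \<psi> \<in> M \<or> Neg \<psi> \<in> M)"
    then obtain \<psi> where n1: "\<psi> \<notin> M" and n2: "Neg \<psi> \<notin> M" by auto
    have "\<not> cons CS (insert \<psi> M)"
    proof
      assume "cons CS (insert \<psi> M)"
      then have "insert \<psi> M \<in> ?A" using M by auto
      then have "insert \<psi> M = M" using mx by blast
      then show False using n1 by auto
    qed
    then obtain L1 where L1: "set L1 \<subseteq> insert \<psi> M" "derivable CS (imps L1 fbot)"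
      by (auto simp: cons_def)
    have "\<not> cons CS (insert (Neg \<psi>) M)"
    proof
      assume "cons CS (insert (Neg \<psi>) M)"
      then have "insert (Neg \<psi>) M \<in> ?A" using M by auto
      then have "insert (Neg \<psi>) M = M" using mx by blast
      then show False using n2 by auto
    qed
    then obtain L2 where L2: "set L2 \<subseteq> insert (Neg \<psi>) M" "derivable CS (imps L2 fbot)"
      by (auto simp: cons_def)
    let ?K = "filter (\<lambda>x. x \<in> M) (L1 @ L2)"
    have "derivable CS (imps ?K fbot)"
    proof (rule taut_mp2[OF L1(2) L2(2)])
      fix v assume h1: "tval v (imps L1 fbot)" and h2: "tval v (imps L2 fbot)"
      show "tval v (imps ?K fbot)"
      proof (cases "tval v \<psi>")
        case True
        then show ?thesis using h1 L1(1) by auto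
      next
        case False
        then show ?thesis using h2 L2(1) by auto
      qed
    qed
    moreover have "set ?K \<subseteq> M" by auto
    ultimately show False using M by (auto simp: cons_def)
  qed
  then show ?thesis using M by (auto simp: mcs_def)
qed


lemma cond_chain:
  assumes m: "mcs CS G"
  shows "Cond a (imps L b) \<in> G \<Longrightarrow> \<forall>\<chi>\<in>set L. Cond a \<chi> \<in> G \<Longrightarrow> Cond a b \<in> G"
proof (induct L)
  case Nil
  then show ?case by simp
next
  case (Cons x xs)
  have ax: "Imp (Cond a (Imp x (imps xs b))) (Imp (Cond a x) (Cond a (imps xs b))) \<in> G"
    by (rule mcs_ax[OF m]) (rule is_axiom.A2)
  have p1: "Cond a (Imp x (imps xs b)) \<in> G" using Cons.prems(1) by simp
  have p2: "Cond a x \<in> G" using Cons.prems(2) by simp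
  have "Imp (Cond a x) (Cond a (imps xs b)) \<in> G" by (rule mcs_mp[OF m p1 ax])
  then have "Cond a (imps xs b) \<in> G" by (rule mcs_mp[OF m p2])
  moreover have "\<forall>\<chi>\<in>set xs. Cond a \<chi> \<in> G" using Cons.prems(2) by simp
  ultimately show ?case by (rule Cons.hyps)
qed

lemma cond_witness:
  assumes m: "mcs CS G" and nc: "Cond a b \<notin> G"
  shows "\<exists>D. mcs CS D \<and> a \<in> D \<and> (\<forall>\<chi>. Cond a \<chi> \<in> G \<longrightarrow> \<chi> \<in> D) \<and> b \<notin> D"
proof -
  let ?S = "{a, Neg b} \<union> {\<chi>. Cond a \<chi> \<in> G}"
  have "cons CS ?S"
    unfolding cons_def
  proof (intro allI impI notI)
    fix L assume L: "set L \<subseteq> ?S" and d: "derivable CS (imps L fbot)"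
    let ?K = "filter (\<lambda>\<chi>. Cond a \<chi> \<in> G) L"
    have d2: "derivable CS (Imp a (imps ?K b))"
    proof (rule taut_mp[OF d])
      fix v assume h: "tval v (imps L fbot)"
      show "tval v (Imp a (imps ?K b))"
      proof (cases "tval v a \<and> (\<forall>x\<in>set ?K. tval v x) \<and> \<not> tval v b")
        case True
        have "\<forall>x\<in>set L. tval v x"
        proof
          fix x assume x: "x \<in> set L"
          then have "x = a \<or> x = Neg b \<or> Cond a x \<in> G" using L by blast
          moreover have "Cond a x \<in> G \<Longrightarrow> x \<in> set ?K" using x by simp
          ultimately show "tval v x" using True by auto
        qed
        then show ?thesis using h by simp
      next
        case False
        then show ?thesis by auto
      qed
    qed
    have "Cond a (Imp a (imps ?K b)) \<in> G"
      by (rule mcs_der[OF m]) (rule derivable.RCN[OF d2])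
    moreover have "Imp (Cond a (Imp a (imps ?K b))) (Imp (Cond a a) (Cond a (imps ?K b))) \<in> G"
      by (rule mcs_ax[OF m]) (rule is_axiom.A2)
    moreover have "Cond a a \<in> G" by (rule mcs_ax[OF m]) (rule is_axiom.A3)
    ultimately have "Cond a (imps ?K b) \<in> G" by (meson mcs_mp[OF m])
    then have "Cond a b \<in> G" using cond_chain[OF m] by simp
    then show False using nc by auto
  qed
  then obtain D where D: "?S \<subseteq> D" "mcs CS D" using lindenbaum by blast
  then have "b \<notin> D" using mcs_neg[OF D(2)] by auto
  then show ?thesis using D by auto
qed

definition isN :: "('c, 'v, 'p) fm set \<Rightarrow> ('c, 'v, 'p) fm set set \<Rightarrow> bool" where
  "isN CS w \<longleftrightarrow> (\<exists>G. mcs CS G \<and> w = {G})"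

definition cM :: "('c, 'v, 'p) fm set \<Rightarrow> (('c, 'v, 'p) fm set set, 'c, 'v, 'p) rmodel" where
  "cM CS = \<lparr> W = UNIV, WN = {w. isN CS w},
     RF = (\<lambda>a. {(w, u). \<exists>G D. w = {G} \<and> u = {D} \<and> mcs CS G \<and> mcs CS D \<and> a \<in> D
                   \<and> (\<forall>\<chi>. Cond a \<chi> \<in> G \<longrightarrow> \<chi> \<in> D)}),
     RT = (\<lambda>t. {(w, u). isN CS w \<and> (u = w \<or> (\<not> isN CS u \<and> (\<forall>a. Just t a \<in> \<Union>w \<longrightarrow> a \<in> \<Union>u)))}),
     VN = (\<lambda>w. {p. Atom p \<in> \<Union>w}),
     VX = (\<lambda>w. \<Union>w) \<rparr>"

lemma mcs_nonempty: "mcs CS G \<Longrightarrow> G \<noteq> {}"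
  using mcs_der[of CS G "Neg fbot"] taut_der[of "Neg fbot" CS] by (auto simp: taut_inst_def)

lemma nonN: "\<not> isN CS {S, {}}"
proof
  assume "isN CS {S, {}}"
  then obtain G where G: "mcs CS G" "{S, {}} = {G}" by (auto simp: isN_def)
  have "{} \<in> {S, {}}" by simp
  then have "G = {}" using G(2) by simp
  then show False using mcs_nonempty[OF G(1)] by simp
qed

lemma RT_iff: "(w, u) \<in> RT (cM CS) t \<longleftrightarrow> isN CS w \<and> (u = w \<or> (\<not> isN CS u \<and> (\<forall>a. Just t a \<in> \<Union>w \<longrightarrow> a \<in> \<Union>u)))"
  by (simp add: cM_def)

lemma RF_iff: "(w, u) \<in> RF (cM CS) a \<longleftrightarrow> (\<exists>G D. w = {G} \<and> u = {D} \<and> mcs CS G \<and> mcs CS D \<and> a \<in> D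
                   \<and> (\<forall>\<chi>. Cond a \<chi> \<in> G \<longrightarrow> \<chi> \<in> D))"
  by (simp add: cM_def)

lemma cM_simps[simp]: "W (cM CS) = UNIV" "WN (cM CS) = {w. isN CS w}" "VX (cM CS) = (\<lambda>w. \<Union>w)"
   "VN (cM CS) = (\<lambda>w. {p. Atom p \<in> \<Union>w})"
  by (simp_all add: cM_def)

lemma truth: "sat (cM CS) w a \<longleftrightarrow> a \<in> \<Union>w"
proof (induct a arbitrary: w rule: fm.induct[where ?P1.0="\<lambda>_. True"])
  case (Const x) show ?case by simp
next
  case (TVar x) show ?case by simp
next
  case (App x y) show ?case by simp
next
  case (Plus x y) show ?case by simp
next
  case (Bang x) show ?case by simp
next
  case (TPair x y) show ?case by simp
next
  case (Atom p)
  show ?case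
  proof (cases "isN CS w")
    case False
    then show ?thesis by simp
  next
    case True
    then obtain G where G: "mcs CS G" "w = {G}" by (auto simp: isN_def)
    then show ?thesis using True by simp
  qed
next
  case (Neg a)
  show ?case
  proof (cases "isN CS w")
    case False
    then show ?thesis by simp
  next
    case True
    then obtain G where G: "mcs CS G" "w = {G}" by (auto simp: isN_def)
    have "sat (cM CS) w (Neg a) = (\<not> sat (cM CS) w a)" using True by simp
    then show ?thesis using Neg[of w] G mcs_neg[OF G(1), of a] by simp
  qed
next
  case (And a b)
  show ?case
  proof (cases "isN CS w")
    case False
    then show ?thesis by simp
  next
    case True
    then obtain G where G: "mcs CS G" "w = {G}" by (auto simp: isN_def)
    have "sat (cM CS) w (And a b) = (sat (cM CS) w a \<and> sat (cM CS) w b)" using True by simp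
    then show ?thesis using And(1)[of w] And(2)[of w] G mcs_and[OF G(1), of a b] by simp
  qed
next
  case (Imp a b)
  show ?case
  proof (cases "isN CS w")
    case False
    then show ?thesis by simp
  next
    case True
    then obtain G where G: "mcs CS G" "w = {G}" by (auto simp: isN_def)
    have "sat (cM CS) w (Imp a b) = (sat (cM CS) w a \<longrightarrow> sat (cM CS) w b)" using True by simp
    then show ?thesis using Imp(1)[of w] Imp(2)[of w] G mcs_imp[OF G(1), of a b] by simp
  qed
next
  case (Cond a b)
  show ?case
  proof (cases "isN CS w")
    case False
    then show ?thesis by simp
  next
    case True
    then obtain G where G: "mcs CS G" "w = {G}" by (auto simp: isN_def)
    show ?thesis
    proof
      assume s: "sat (cM CS) w (Cond a b)"
      show "Cond a b \<in> \<Union>w"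
      proof (rule ccontr)
        assume "Cond a b \<notin> \<Union>w"
        then have "Cond a b \<notin> G" using G by auto
        then obtain D where D: "mcs CS D" "a \<in> D" "\<forall>\<chi>. Cond a \<chi> \<in> G \<longrightarrow> \<chi> \<in> D" "b \<notin> D"
          using cond_witness[OF G(1)] by blast
        have "(w, {D}) \<in> RF (cM CS) a" unfolding RF_iff using G D by auto
        then have "sat (cM CS) {D} b" using s True by simp
        then show False using Cond D(4) by auto
      qed
    next
      assume "Cond a b \<in> \<Union>w"
      then have c: "Cond a b \<in> G" using G by auto
      show "sat (cM CS) w (Cond a b)"
      proof -
        have "\<forall>v. (w, v) \<in> RF (cM CS) a \<longrightarrow> v \<in> W (cM CS) \<and> sat (cM CS) v b"
        proof (intro allI impI)
          fix v assume "(w, v) \<in> RF (cM CS) a"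
          then obtain G' D where "w = {G'}" "v = {D}" "\<forall>\<chi>. Cond a \<chi> \<in> G' \<longrightarrow> \<chi> \<in> D"
            unfolding RF_iff by blast
          then have "b \<in> \<Union>v" using c G by auto
          then show "v \<in> W (cM CS) \<and> sat (cM CS) v b" using Cond by simp
        qed
        then show ?thesis using True by simp
      qed
    qed
  qed
next
  case (Just t a)
  show ?case
  proof (cases "isN CS w")
    case False
    then show ?thesis by simp
  next
    case True
    then obtain G where G: "mcs CS G" "w = {G}" by (auto simp: isN_def)
    show ?thesis
    proof
      assume s: "sat (cM CS) w (Just t a)"
      let ?u = "{{a. Just t a \<in> G}, {}}"
      have "(w, ?u) \<in> RT (cM CS) t" unfolding RT_iff using G True nonN by auto
      then have "sat (cM CS) ?u a" using s True by simp
      then have "a \<in> \<Union>?u" using Just by auto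
      then show "Just t a \<in> \<Union>w" using G by auto
    next
      assume "Just t a \<in> \<Union>w"
      then have c: "Just t a \<in> G" using G by auto
      then have "a \<in> G" using mcs_fact[OF G(1)] by auto
      show "sat (cM CS) w (Just t a)"
      proof -
        have "\<forall>v. (w, v) \<in> RT (cM CS) t \<longrightarrow> v \<in> W (cM CS) \<and> sat (cM CS) v a"
        proof (intro allI impI)
          fix v assume "(w, v) \<in> RT (cM CS) t"
          then have "v = w \<or> (\<forall>a. Just t a \<in> \<Union>w \<longrightarrow> a \<in> \<Union>v)" unfolding RT_iff by blast
          then have "a \<in> \<Union>v" using c G \<open>a \<in> G\<close> by auto
          then show "v \<in> W (cM CS) \<and> sat (cM CS) v a" using Just by simp
        qed
        then show ?thesis using True by simp
      qed
    qed
  qed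
qed


lemma ext_iff: "ext (cM CS) a = {w. a \<in> \<Union>w}"
  by (auto simp: ext_def truth)

lemma isN_G: "isN CS w \<Longrightarrow> \<exists>G. mcs CS G \<and> w = {G}"
  by (simp add: isN_def)

lemma RT_nN: "(w, u) \<in> RT (cM CS) t \<Longrightarrow> w = {G} \<Longrightarrow> mcs CS G \<Longrightarrow>
   u = w \<or> (\<forall>a. Just t a \<in> G \<longrightarrow> a \<in> \<Union>u)"
  unfolding RT_iff by auto

lemma canon_model:
  assumes G0: "mcs CS G0"
  shows "lpc_model CS (cM CS)"
  unfolding lpc_model_def
proof (intro conjI ballI)
  show "rel_model (cM CS)"
  proof -
    have "{G0} \<in> WN (cM CS)" using G0 by (simp add: isN_def)
    moreover have "\<forall>\<phi>. RF (cM CS) \<phi> \<subseteq> WN (cM CS) \<times> WN (cM CS)"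
    proof (intro allI subsetI)
      fix \<phi> x assume "x \<in> RF (cM CS) \<phi>"
      then obtain w u where x: "x = (w, u)" "(w, u) \<in> RF (cM CS) \<phi>" by (cases x) auto
      then obtain G D where "w = {G}" "u = {D}" "mcs CS G" "mcs CS D" unfolding RF_iff by blast
      then show "x \<in> WN (cM CS) \<times> WN (cM CS)" using x(1) by (simp add: isN_def)
    qed
    ultimately show ?thesis unfolding rel_model_def by auto
  qed
next
  fix w assume "w \<in> WN (cM CS)"
  then obtain G where G: "mcs CS G" "w = {G}" using isN_G by auto
  have wN: "isN CS w" using G by (auto simp: isN_def)
  show "\<forall>\<phi>. succs (RF (cM CS) \<phi>) w \<subseteq> ext (cM CS) \<phi>"
    by (auto simp: succs_def ext_iff RF_iff)
  show "\<forall>\<phi>. w \<in> ext (cM CS) \<phi> \<longrightarrow> w \<in> succs (RF (cM CS) \<phi>) w"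
    using G mcs_cond_mp[OF G(1)] by (auto simp: succs_def ext_iff RF_iff)
  show "\<forall>c \<phi>. Just (Const c) \<phi> \<in> CS \<longrightarrow> succs (RT (cM CS) (Const c)) w \<subseteq> ext (cM CS) \<phi>"
  proof (intro allI impI subsetI)
    fix c \<phi> v assume cs: "Just (Const c) \<phi> \<in> CS" and v: "v \<in> succs (RT (cM CS) (Const c)) w"
    have j: "Just (Const c) \<phi> \<in> G" using mcs_der[OF G(1) derivable.CSax[OF cs]] .
    have "\<phi> \<in> G" using mcs_fact[OF G(1) j] .
    then show "v \<in> ext (cM CS) \<phi>" using RT_nN[OF _ G(2) G(1)] v j G by (auto simp: succs_def ext_iff)
  qed
  show "\<forall>s t. succs (RT (cM CS) (Plus s t)) w \<subseteq> succs (RT (cM CS) s) w \<inter> succs (RT (cM CS) t) w"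
  proof (intro allI subsetI)
    fix s t v assume v: "v \<in> succs (RT (cM CS) (Plus s t)) w"
    then have r: "(w, v) \<in> RT (cM CS) (Plus s t)" by (simp add: succs_def)
    have h1: "\<And>a. Just s a \<in> G \<Longrightarrow> Just (Plus s t) a \<in> G"
      by (rule mcs_cond_mp[OF G(1) mcs_ax[OF G(1) is_axiom.A6]])
    have h2: "\<And>a. Just t a \<in> G \<Longrightarrow> Just (Plus s t) a \<in> G"
      by (rule mcs_cond_mp[OF G(1) mcs_ax[OF G(1) is_axiom.A7]])
    show "v \<in> succs (RT (cM CS) s) w \<inter> succs (RT (cM CS) t) w"
    proof -
      have "v = w \<or> (\<not> isN CS v \<and> (\<forall>a. Just (Plus s t) a \<in> \<Union>w \<longrightarrow> a \<in> \<Union>v))"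
        using r unfolding RT_iff by blast
      then have "v = w \<or> (\<not> isN CS v \<and> (\<forall>a. Just (Plus s t) a \<in> G \<longrightarrow> a \<in> \<Union>v))"
        using G(2) by simp
      then have "(w, v) \<in> RT (cM CS) s \<and> (w, v) \<in> RT (cM CS) t"
        unfolding RT_iff using wN G(2) h1 h2 by auto
      then show ?thesis by (simp add: succs_def)
    qed
  qed
  show "\<forall>s t. \<forall>v\<in>succs (RT (cM CS) (App s t)) w. \<forall>\<phi> \<psi>.
          w \<in> ext (cM CS) (And (Just s (Cond \<phi> \<psi>)) (Just t \<phi>)) \<longrightarrow> v \<in> ext (cM CS) \<psi>"
  proof (intro allI ballI impI)
    fix s t v \<phi> \<psi>
    assume v: "v \<in> succs (RT (cM CS) (App s t)) w"
      and e: "w \<in> ext (cM CS) (And (Just s (Cond \<phi> \<psi>)) (Just t \<phi>))"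
    have a: "And (Just s (Cond \<phi> \<psi>)) (Just t \<phi>) \<in> G" using e G by (simp add: ext_iff)
    have j: "Just (App s t) \<psi> \<in> G"
      by (rule mcs_cond_mp[OF G(1) mcs_ax[OF G(1) is_axiom.A5] a])
    have "\<psi> \<in> G" using mcs_fact[OF G(1) j] .
    then show "v \<in> ext (cM CS) \<psi>" using RT_nN[OF _ G(2) G(1)] v j G by (auto simp: succs_def ext_iff)
  qed
  show "\<forall>t. (w, w) \<in> RT (cM CS) t" using wN by (simp add: RT_iff)
  show "\<forall>t. \<forall>v\<in>W (cM CS). \<forall>u\<in>W (cM CS). (w, v) \<in> RT (cM CS) (Bang t) \<and> (v, u) \<in> RT (cM CS) t
          \<longrightarrow> (w, u) \<in> RT (cM CS) t"
  proof (intro allI ballI impI)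
    fix t v u assume h: "(w, v) \<in> RT (cM CS) (Bang t) \<and> (v, u) \<in> RT (cM CS) t"
    then have "isN CS v" unfolding RT_iff by blast
    moreover have "v = w \<or> \<not> isN CS v" using h unfolding RT_iff by blast
    ultimately show "(w, u) \<in> RT (cM CS) t" using h by auto
  qed
  show "\<forall>\<phi> \<psi> t. w \<in> ext (cM CS) (Just t \<psi>) \<and> (w, v) \<in> RT (cM CS) (TPair t \<phi>)
          \<longrightarrow> v \<in> ext (cM CS) (Cond \<phi> \<psi>)" if "v \<in> W (cM CS)" for v
  proof (intro allI impI)
    fix \<phi> \<psi> t
    assume h: "w \<in> ext (cM CS) (Just t \<psi>) \<and> (w, v) \<in> RT (cM CS) (TPair t \<phi>)"
    have a: "Just t \<psi> \<in> G" using h G by (simp add: ext_iff)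
    have j: "Just (TPair t \<phi>) (Cond \<phi> \<psi>) \<in> G"
      by (rule mcs_mp[OF G(1) a mcs_ax[OF G(1) is_axiom.A10]])
    have "Cond \<phi> \<psi> \<in> G" using mcs_fact[OF G(1) j] .
    then show "v \<in> ext (cM CS) (Cond \<phi> \<psi>)" using RT_nN[OF _ G(2) G(1), of v] h j G by (auto simp: ext_iff)
  qed
qed

theorem mainTheorem11:
  fixes CS :: "('c::countable, 'v::countable, 'p::countable) fm set"
    and T :: "('c, 'v, 'p) fm set"
    and \<phi> :: "('c, 'v, 'p) fm"
  assumes "const_spec CS"
    and "entails CS T \<phi>"
  shows "derives CS T \<phi>"
proof (rule ccontr)
  assume nd: "\<not> derives CS T \<phi>"
  have "cons CS (insert (Neg \<phi>) T)"
    unfolding cons_def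
  proof (intro allI impI notI)
    fix L assume L: "set L \<subseteq> insert (Neg \<phi>) T" and d: "derivable CS (imps L fbot)"
    let ?K = "filter (\<lambda>x. x \<noteq> Neg \<phi>) L"
    have K: "set ?K \<subseteq> T" using L by auto
    show False
    proof (cases "?K = []")
      case True
      have "derivable CS \<phi>"
      proof (rule taut_mp[OF d])
        fix v assume h: "tval v (imps L fbot)"
        show "tval v \<phi>"
        proof (rule ccontr)
          assume n: "\<not> tval v \<phi>"
          have "\<forall>x\<in>set L. x = Neg \<phi>" using True by (simp add: filter_empty_conv)
          then have "\<forall>x\<in>set L. tval v x" using n by auto
          then show False using h by simp
        qed
      qed
      then show False using nd by (simp add: derives_def)
    next
      case False
      have "derivable CS (Imp (conjs ?K) \<phi>)"
      proof (rule taut_mp[OF d])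
        fix v assume h: "tval v (imps L fbot)"
        show "tval v (Imp (conjs ?K) \<phi>)"
        proof (cases "tval v (conjs ?K) \<and> \<not> tval v \<phi>")
          case True
          then have "\<forall>x\<in>set ?K. tval v x" using tval_conjs[OF False] by simp
          have "\<forall>x\<in>set L. tval v x"
          proof
            fix x assume x: "x \<in> set L"
            show "tval v x"
            proof (cases "x = Neg \<phi>")
              case True
              then show ?thesis using \<open>tval v (conjs ?K) \<and> \<not> tval v \<phi>\<close> by simp
            next
              case False
              then have "x \<in> set ?K" using x by simp
              then show ?thesis using \<open>\<forall>x\<in>set ?K. tval v x\<close> by blast
            qed
          qed
          then show ?thesis using h by simp
        next
          case False
          then show ?thesis by auto
        qed
      qed
      then show False using nd K False unfolding derives_def by blast
    qed
  qed
  then obtain G where G: "insert (Neg \<phi>) T \<subseteq> G" "mcs CS G" using lindenbaum by blast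
  have m: "lpc_model CS (cM CS)" by (rule canon_model[OF G(2)])
  have wN: "{G} \<in> WN (cM CS)" using G by (simp add: isN_def)
  have "\<forall>\<psi>\<in>T. sat (cM CS) {G} \<psi>" using G by (auto simp: truth)
  then have "sat (cM CS) {G} \<phi>" using assms(2) m wN unfolding entails_def by blast
  then have "\<phi> \<in> G" by (simp add: truth)
  moreover have "Neg \<phi> \<in> G" using G by auto
  ultimately show False using mcs_neg[OF G(2)] by simp
qed

end
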